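(* Let $\mathcal{G}=(\mathcal{V},\mathcal{E},\mathcal{W})$ be an undirected weighted graph (weights are nonzero reals, possibly negative) with $c$ connected components, and let $\mathcal{F}$ be a spanning forest of $\mathcal{G}$ with cycle subgraph $\mathcal{C}$. Then the weighted Laplacian $L(\mathcal{G})=EWE^T$ is similar to the block-diagonal matrix $$\begin{bmatrix} L_e(\mathcal{F})\, R_{(\mathcal{F},\mathcal{C})}\, W\, R_{(\mathcal{F},\mathcal{C})}^T & 0 \\ 0 & 0_{c\times c}\end{bmatrix},$$ where $R_{(\mathcal{F},\mathcal{C})}=\begin{bmatrix} I & L_e(\mathcal{F})^{-1}E_{\mathcal{F}}^TE_{\mathcal{C}}\end{bmatrix}$.
   Context: A weighted graph $\mathcal{G}=(\mathcal{V},\mathcal{E},\mathcal{W})$ has node set $\mathcal{V}$, edge set $\mathcal{E}$ and weight function $\mathcal{W}:\mathcal{E}\to\mathbb{R}\setminus\{0\}$; $W$ is the $|\mathcal{E}|\times|\mathcal{E}|$ diagonal matrix with $W_{kk}=w_k=\mathcal{W}(k)$. Each edge is given an arbitrary orientation, and the incidence matrix $E\in\mathbb{R}^{|\mathcal{V}|\times|\mathcal{E}|}$ has, in the column of edge $k=(i,j)$, entry $+1$ in row $i$, $-1$ in row $j$, and $0$ elsewhere. The weighted Laplacian is $L(\mathcal{G})=EWE^T$. A spanning forest $\mathcal{F}=(\mathcal{V},\mathcal{E}_{\mathcal{F}})$ is an acyclic subgraph with $|\mathcal{V}|-c$ edges containing a spanning tree of each connected component; the cycle subgraph is $\mathcal{C}=(\mathcal{V},\mathcal{E}\setminus\mathcal{E}_{\mathcal{F}})$.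 Edges are labeled so that $E=[E_{\mathcal{F}}\ E_{\mathcal{C}}]$ with $E_{\mathcal{F}}, E_{\mathcal{C}}$ the incidence matrices of $\mathcal{F}$ and $\mathcal{C}$, and $W$ is ordered accordingly. $L_e(\mathcal{F})=E_{\mathcal{F}}^TE_{\mathcal{F}}$ (the edge Laplacian of the forest), which is invertible since $E_{\mathcal{F}}$ has full column rank. *)

theory Defs
  imports "Jordan_Normal_Form.Matrix" "Jordan_Normal_Form.Gauss_Jordan_Elimination"
begin

text \<open>Graphs: vertex set {0..<n}; edges given as a list of oriented pairs (i,j),
  the k-th list element being edge k with orientation i -> j.\<close>

definition simple_graph :: "nat \<Rightarrow> (nat \<times> nat) list \<Rightarrow> bool" where
  "simple_graph n es \<longleftrightarrow> (\<forall>(a,b)\<in>set es. a < n \<and> b < n \<and> a \<noteq> b)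
     \<and> distinct (map (\<lambda>(a,b). {a,b}) es)"

definition adj :: "(nat \<times> nat) list \<Rightarrow> nat \<Rightarrow> nat \<Rightarrow> bool" where
  "adj es u v \<longleftrightarrow> (\<exists>(a,b)\<in>set es. (a = u \<and> b = v) \<or> (a = v \<and> b = u))"

definition reach :: "(nat \<times> nat) list \<Rightarrow> nat \<Rightarrow> nat \<Rightarrow> bool" where
  "reach es = (adj es)\<^sup>*\<^sup>*"

definition num_components :: "nat \<Rightarrow> (nat \<times> nat) list \<Rightarrow> nat" where
  "num_components n es = card ({0..<n} // {(u,v). u < n \<and> v < n \<and> reach es u v})"

definition is_cycle :: "(nat \<times> nat) list \<Rightarrow> nat list \<Rightarrow> bool" where
  "is_cycle es vs \<longleftrightarrow> length vs \<ge> 3 \<and> distinct vs \<and>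
     (\<forall>i < length vs. adj es (vs ! i) (vs ! ((i + 1) mod length vs)))"

definition acyclic_graph :: "(nat \<times> nat) list \<Rightarrow> bool" where
  "acyclic_graph es \<longleftrightarrow> \<not> (\<exists>vs. is_cycle es vs)"

definition spanning_forest :: "nat \<Rightarrow> (nat \<times> nat) list \<Rightarrow> (nat \<times> nat) list \<Rightarrow> bool" where
  "spanning_forest n fs es \<longleftrightarrow> set fs \<subseteq> set es \<and> acyclic_graph fs
     \<and> length fs = n - num_components n es
     \<and> (\<forall>u < n. \<forall>v < n. reach fs u v \<longleftrightarrow> reach es u v)"

definition incidence :: "nat \<Rightarrow> (nat \<times> nat) list \<Rightarrow> real mat" where
  "incidence n es = mat n (length es)
     (\<lambda>(i,k). if i = fst (es ! k) then 1 else if i = snd (es ! k) then -1 else 0)"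

definition hcat :: "'a mat \<Rightarrow> 'a mat \<Rightarrow> 'a mat" where
  "hcat A B = mat (dim_row A) (dim_col A + dim_col B)
     (\<lambda>(i,j). if j < dim_col A then A $$ (i,j) else B $$ (i, j - dim_col A))"

end

theory Submission
  imports Defs "Jordan_Normal_Form.Determinant"
begin


lemma four_block_drop:
  assumes "A \<in> carrier_mat nr nc" "B \<in> carrier_mat nr 0" "C \<in> carrier_mat 0 nc" "D \<in> carrier_mat 0 0"
  shows "four_block_mat A B C D = A"
  by (rule eq_matI, insert assms, auto)

lemma hcat_carrier: "A \<in> carrier_mat n p \<Longrightarrow> B \<in> carrier_mat n q \<Longrightarrow> hcat A B \<in> carrier_mat n (p+q)"
  unfolding hcat_def by auto

lemma mult_hcat:
  assumes A: "A \<in> carrier_mat n p" and B: "B \<in> carrier_mat p q1" and C: "C \<in> carrier_mat p q2"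
  shows "A * hcat B C = hcat (A * B) (A * C)"
proof (rule eq_matI)
  fix i j assume i: "i < dim_row (hcat (A * B) (A * C))" and j: "j < dim_col (hcat (A * B) (A * C))"
  show "(A * hcat B C) $$ (i, j) = hcat (A * B) (A * C) $$ (i, j)"
    using i j A B C unfolding hcat_def by (auto simp: scalar_prod_def)
qed (insert A B C, auto simp: hcat_def)

lemma incidence_append: "incidence n (fs @ cs) = hcat (incidence n fs) (incidence n cs)"
  by (rule eq_matI, auto simp: incidence_def hcat_def nth_append)



lemma la_main:
  fixes EF EC K W :: "real mat"
  assumes EF: "EF \<in> carrier_mat n f" and EC: "EC \<in> carrier_mat n m" and K: "K \<in> carrier_mat n c"
    and fc: "f + c = n"
    and EFK: "transpose_mat EF * K = 0\<^sub>m f c"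
    and KEC: "transpose_mat K * EC = 0\<^sub>m c m"
    and KK: "transpose_mat K * K = mat_diag c d" and dnz: "\<forall>j<c. d j \<noteq> 0"
    and inj: "\<And>x. x \<in> carrier_vec n \<Longrightarrow> transpose_mat EF *\<^sub>v x = 0\<^sub>v f \<Longrightarrow> transpose_mat K *\<^sub>v x = 0\<^sub>v c \<Longrightarrow> x = 0\<^sub>v n"
    and W: "W \<in> carrier_mat (f+m) (f+m)"
  shows "let Le = transpose_mat EF * EF;
             R = hcat (1\<^sub>m f) (the (mat_inverse Le) * transpose_mat EF * EC)
         in similar_mat (hcat EF EC * W * transpose_mat (hcat EF EC))
              (four_block_mat (Le * R * W * transpose_mat R) (0\<^sub>m f c)
                              (0\<^sub>m c f) (0\<^sub>m c c))"
proof -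
  define Le where "Le = transpose_mat EF * EF"
  have Le: "Le \<in> carrier_mat f f" using EF unfolding Le_def by auto
  have KEF: "transpose_mat K * EF = 0\<^sub>m c f"
  proof -
    have "transpose_mat K * EF = transpose_mat (transpose_mat EF * K)"
      using transpose_mult[of "transpose_mat EF" f n K c] EF K by simp
    also have "\<dots> = 0\<^sub>m c f" using EFK by simp
    finally show ?thesis .
  qed
  define Pp where "Pp = four_block_mat EF K (0\<^sub>m 0 f) (0\<^sub>m 0 c)"
  have Pp: "Pp \<in> carrier_mat n n" unfolding Pp_def using EF K fc by (metis add_0_right four_block_carrier_mat zero_carrier_mat)
  define Qp where "Qp = transpose_mat Pp"
  have Qp_def2: "Qp = four_block_mat (transpose_mat EF) (0\<^sub>m f 0) (transpose_mat K) (0\<^sub>m c 0)"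
    unfolding Qp_def Pp_def using transpose_four_block_mat[OF EF K, of "0\<^sub>m 0 f" 0 "0\<^sub>m 0 c"] by simp
  have Qp: "Qp \<in> carrier_mat n n" using Pp unfolding Qp_def by simp
  have "det Qp \<noteq> 0"
  proof
    assume "det Qp = 0"
    then obtain x where x: "x \<in> carrier_vec n" "x \<noteq> 0\<^sub>v n" "Qp *\<^sub>v x = 0\<^sub>v n"
      using det_0_iff_vec_prod_zero[OF Qp] by auto
    have "transpose_mat EF *\<^sub>v x = 0\<^sub>v f"
    proof (rule eq_vecI)
      fix i assume i: "i < dim_vec (0\<^sub>v f)"
      hence "(Qp *\<^sub>v x) $ i = 0" unfolding x(3) using fc by simp
      moreover have "(Qp *\<^sub>v x) $ i = (transpose_mat EF *\<^sub>v x) $ i"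
        using i EF K fc x(1) unfolding Qp_def2 by (auto simp: scalar_prod_def)
      ultimately show "(transpose_mat EF *\<^sub>v x) $ i = 0\<^sub>v f $ i" using i by auto
    qed (insert EF, auto)
    moreover have "transpose_mat K *\<^sub>v x = 0\<^sub>v c"
    proof (rule eq_vecI)
      fix i assume i: "i < dim_vec (0\<^sub>v c)"
      hence "(Qp *\<^sub>v x) $ (f + i) = 0" unfolding x(3) using fc by simp
      moreover have "(Qp *\<^sub>v x) $ (f + i) = (transpose_mat K *\<^sub>v x) $ i"
        using i EF K fc x(1) unfolding Qp_def2 by (auto simp: scalar_prod_def)
      ultimately show "(transpose_mat K *\<^sub>v x) $ i = 0\<^sub>v c $ i" using i by auto
    qed (insert K, auto)
    ultimately show False using inj x by auto
  qed
  have QPp: "Qp * Pp = four_block_mat Le (0\<^sub>m f c) (0\<^sub>m c f) (mat_diag c d)"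
    unfolding Qp_def2 Pp_def
    by (subst mult_four_block_mat[of _ f n _ 0 _ c, where ?nc1.0 = f and ?nc2.0 = c],
        insert EF K, auto simp: Le_def EFK KEF KK)
  have "det (Qp * Pp) = det Le * det (mat_diag c d)"
    unfolding QPp by (rule det_four_block_mat_upper_right_zero[OF Le], auto)
  moreover have "det (Qp * Pp) = det Qp * det Qp"
    using det_mult[OF Qp Pp] det_transpose[OF Pp] unfolding Qp_def by simp
  ultimately have "det Le \<noteq> 0" using \<open>det Qp \<noteq> 0\<close> by auto
  hence U: "Le \<in> Units (ring_mat TYPE(real) f ())" by (rule det_non_zero_imp_unit[OF Le])
  have "mat_inverse Le \<noteq> None" using mat_inverse(1)[OF Le, of "()"] U by blast
  then obtain Li where mi: "mat_inverse Le = Some Li" by auto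
  from mat_inverse(2)[OF Le mi] have LeLi: "Le * Li = 1\<^sub>m f" and LiLe: "Li * Le = 1\<^sub>m f"
    and Li: "Li \<in> carrier_mat f f" by auto
  define Di where "Di = mat_diag c (\<lambda>j. 1 / d j)"
  have Di: "Di \<in> carrier_mat c c" unfolding Di_def by simp
  have KKDi: "transpose_mat K * K * Di = 1\<^sub>m c"
  proof -
    have "mat_diag c d * Di = mat_diag c (\<lambda>j. d j * (1 / d j))" unfolding Di_def by simp
    also have "\<dots> = mat_diag c (\<lambda>j. 1)" unfolding mat_diag_def
      by (rule cong_mat, insert dnz, auto)
    also have "\<dots> = 1\<^sub>m c" by simp
    finally show ?thesis unfolding KK .
  qed
  define P where "P = four_block_mat (EF * Li) (K * Di) (0\<^sub>m 0 f) (0\<^sub>m 0 c)"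
  have P: "P \<in> carrier_mat n n" unfolding P_def using EF K fc Li Di
    by (metis add_0_right four_block_carrier_mat mult_carrier_mat zero_carrier_mat)
  have EF': "transpose_mat EF \<in> carrier_mat f n" and K': "transpose_mat K \<in> carrier_mat c n"
    using EF K by auto
  have QP: "Qp * P = 1\<^sub>m n"
  proof -
    have "Qp * P = four_block_mat (transpose_mat EF * (EF * Li)) (transpose_mat EF * (K * Di))
        (transpose_mat K * (EF * Li)) (transpose_mat K * (K * Di))"
      unfolding Qp_def2 P_def
      by (subst mult_four_block_mat[of _ f n _ 0 _ c, where ?nc1.0 = f and ?nc2.0 = c],
        insert EF K Li Di, auto)
    also have "\<dots> = four_block_mat (1\<^sub>m f) (0\<^sub>m f c) (0\<^sub>m c f) (1\<^sub>m c)"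
    proof -
      have "transpose_mat EF * (EF * Li) = 1\<^sub>m f"
        using assoc_mult_mat[OF EF' EF Li] LeLi Le_def by simp
      moreover have "transpose_mat EF * (K * Di) = 0\<^sub>m f c"
        using assoc_mult_mat[OF EF' K Di] EFK Di by simp
      moreover have "transpose_mat K * (EF * Li) = 0\<^sub>m c f"
        using assoc_mult_mat[OF K' EF Li] KEF Li by simp
      moreover have "transpose_mat K * (K * Di) = 1\<^sub>m c"
        using assoc_mult_mat[OF K' K Di] KKDi by simp
      ultimately show ?thesis by simp
    qed
    finally show ?thesis using fc by simp
  qed
  have PQ: "P * Qp = 1\<^sub>m n" by (rule mat_mult_left_right_inverse[OF Qp P QP])
  have proj: "EF * Li * transpose_mat EF + K * Di * transpose_mat K = 1\<^sub>m n"
  proof -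
    have "P * Qp = four_block_mat (EF * Li * transpose_mat EF + K * Di * transpose_mat K)
        (EF * Li * 0\<^sub>m f 0 + K * Di * 0\<^sub>m c 0) (0\<^sub>m 0 f * transpose_mat EF + 0\<^sub>m 0 c * transpose_mat K)
        (0\<^sub>m 0 f * 0\<^sub>m f 0 + 0\<^sub>m 0 c * 0\<^sub>m c 0)"
      unfolding Qp_def2 P_def
      by (rule mult_four_block_mat[of _ n f _ c _ 0 _ _ n _ 0], insert EF K Li Di, auto)
    also have "\<dots> = EF * Li * transpose_mat EF + K * Di * transpose_mat K"
      by (rule four_block_drop, insert EF K Li Di, auto)
    finally show ?thesis using PQ by simp
  qed
  define X where "X = Li * transpose_mat EF * EC"
  have X: "X \<in> carrier_mat f m" unfolding X_def using Li EF EC by auto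
  have EFLi: "EF * Li \<in> carrier_mat n f" using EF Li by auto
  have Pr: "EF * Li * transpose_mat EF \<in> carrier_mat n n" using EFLi EF' by auto
  have KDi: "K * Di \<in> carrier_mat n c" using K Di by auto
  have KDK: "K * Di * transpose_mat K \<in> carrier_mat n n" using KDi K' by auto
  have EFX: "EF * X = EC"
  proof -
    have LiEF: "Li * transpose_mat EF \<in> carrier_mat f n" using Li EF' by auto
    have "EF * X = EF * (Li * transpose_mat EF) * EC"
      unfolding X_def using assoc_mult_mat[OF EF LiEF EC] by simp
    also have "\<dots> = EF * Li * transpose_mat EF * EC"
      using assoc_mult_mat[OF EF Li EF'] by simp
    finally have 1: "EF * X = EF * Li * transpose_mat EF * EC" .
    have 2: "K * Di * transpose_mat K * EC = 0\<^sub>m n m"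
      using assoc_mult_mat[OF KDi K' EC] KEC right_mult_zero_mat[OF KDi] by simp
    have "EC = (EF * Li * transpose_mat EF + K * Di * transpose_mat K) * EC"
      unfolding proj using EC by simp
    also have "\<dots> = EF * Li * transpose_mat EF * EC + K * Di * transpose_mat K * EC"
      by (rule add_mult_distrib_mat[OF Pr KDK EC])
    also have "\<dots> = EF * X" unfolding 1 2 using Pr EC by simp
    finally show ?thesis by simp
  qed
  define R where "R = hcat (1\<^sub>m f) X"
  have R: "R \<in> carrier_mat f (f + m)" unfolding R_def by (rule hcat_carrier[OF _ X], simp)
  have R': "transpose_mat R \<in> carrier_mat (f + m) f" using R by simp
  define E where "E = hcat EF EC"
  have Ec: "E \<in> carrier_mat n (f + m)" unfolding E_def by (rule hcat_carrier[OF EF EC])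
  have EFR: "EF * R = E"
    unfolding R_def E_def mult_hcat[OF EF one_carrier_mat X] using EFX EF by simp
  have ET: "transpose_mat E = transpose_mat R * transpose_mat EF"
    unfolding EFR[symmetric] by (rule transpose_mult[OF EF R])
  define M1 where "M1 = Le * R * W * transpose_mat R"
  have M1: "M1 \<in> carrier_mat f f" unfolding M1_def using Le R W by auto
  define V where "V = W * (transpose_mat R * transpose_mat EF)"
  have RE: "transpose_mat R * transpose_mat EF \<in> carrier_mat (f+m) n" using R' EF' by auto
  have V: "V \<in> carrier_mat (f + m) n" unfolding V_def using W RE by auto
  define Z where "Z = R * V"
  have Z: "Z \<in> carrier_mat f n" unfolding Z_def using R V by auto
  have M1E: "M1 * transpose_mat EF = Le * Z"
  proof -
    have LeR: "Le * R \<in> carrier_mat f (f+m)" using Le R by auto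
    have LeRW: "Le * R * W \<in> carrier_mat f (f+m)" using LeR W by auto
    have "M1 * transpose_mat EF = Le * R * W * (transpose_mat R * transpose_mat EF)"
      unfolding M1_def by (rule assoc_mult_mat[OF LeRW R' EF'])
    also have "\<dots> = Le * R * V" unfolding V_def by (rule assoc_mult_mat[OF LeR W RE])
    also have "\<dots> = Le * Z" unfolding Z_def by (rule assoc_mult_mat[OF Le R V])
    finally show ?thesis .
  qed
  have main: "EF * Li * M1 * transpose_mat EF = E * W * transpose_mat E"
  proof -
    have "EF * Li * M1 * transpose_mat EF = EF * Li * (Le * Z)"
      using assoc_mult_mat[OF EFLi M1 EF'] M1E by simp
    also have "\<dots> = EF * (Li * (Le * Z))" using assoc_mult_mat[OF EF Li mult_carrier_mat[OF Le Z]] by simp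
    also have "Li * (Le * Z) = Z" using assoc_mult_mat[OF Li Le Z] LiLe Z by simp
    also have "EF * Z = E * V" unfolding Z_def using assoc_mult_mat[OF EF R V] EFR by simp
    also have "\<dots> = E * W * transpose_mat E" unfolding V_def ET using assoc_mult_mat[OF Ec W RE] by simp
    finally show ?thesis .
  qed
  have PB: "P * four_block_mat M1 (0\<^sub>m f c) (0\<^sub>m c f) (0\<^sub>m c c)
      = four_block_mat (EF * Li * M1) (0\<^sub>m n c) (0\<^sub>m 0 f) (0\<^sub>m 0 c)"
    unfolding P_def
    by (subst mult_four_block_mat[of _ n f _ c _ 0 _ _ f _ c], insert EFLi KDi M1 mult_carrier_mat[OF EFLi M1],
      auto simp: right_mult_zero_mat[OF EFLi] right_mult_zero_mat[OF KDi])
  have PBQ: "P * four_block_mat M1 (0\<^sub>m f c) (0\<^sub>m c f) (0\<^sub>m c c) * Qp = E * W * transpose_mat E"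
  proof -
    have "P * four_block_mat M1 (0\<^sub>m f c) (0\<^sub>m c f) (0\<^sub>m c c) * Qp
      = four_block_mat (EF * Li * M1 * transpose_mat EF + 0\<^sub>m n c * transpose_mat K)
         (EF * Li * M1 * 0\<^sub>m f 0 + 0\<^sub>m n c * 0\<^sub>m c 0)
         (0\<^sub>m 0 f * transpose_mat EF + 0\<^sub>m 0 c * transpose_mat K)
         (0\<^sub>m 0 f * 0\<^sub>m f 0 + 0\<^sub>m 0 c * 0\<^sub>m c 0)"
      unfolding PB Qp_def2
      by (rule mult_four_block_mat[of _ n f _ c _ 0 _ _ n _ 0], insert EFLi M1 EF' K', auto)
    also have "\<dots> = EF * Li * M1 * transpose_mat EF + 0\<^sub>m n c * transpose_mat K"
      by (rule four_block_drop, insert EFLi M1 EF' K', auto)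
    also have "\<dots> = EF * Li * M1 * transpose_mat EF" using EFLi M1 EF' K' by simp
    finally show ?thesis using main by simp
  qed
  have EWE: "E * W * transpose_mat E \<in> carrier_mat n n" using Ec W by auto
  have "similar_mat_wit (E * W * transpose_mat E) (four_block_mat M1 (0\<^sub>m f c) (0\<^sub>m c f) (0\<^sub>m c c)) P Qp"
    by (rule similar_mat_witI[OF PQ QP PBQ[symmetric] EWE _ P Qp], insert M1 fc, auto)
  hence "similar_mat (E * W * transpose_mat E) (four_block_mat M1 (0\<^sub>m f c) (0\<^sub>m c f) (0\<^sub>m c c))"
    unfolding similar_mat_def by blast
  thus ?thesis using mi unfolding Let_def E_def M1_def R_def X_def Le_def by simp
qed


lemma sum_edge:
  fixes g :: "nat \<Rightarrow> real"
  assumes "a < n" "b < n" "a \<noteq> b"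
  shows "(\<Sum>v = 0..<n. (if v = a then 1 else if v = b then -1 else 0) * g v) = g a - g b"
    and "(\<Sum>v = 0..<n. g v * (if v = a then 1 else if v = b then -1 else 0)) = g a - g b"
proof -
  have eq: "\<And>v. (if v = a then 1 else if v = b then -1 else 0) * g v
     = (if v = a then g v else 0) + (if v = b then - g v else 0)" using assms by auto
  have "(\<Sum>v = 0..<n. (if v = a then 1 else if v = b then -1 else 0) * g v) = g a - g b"
    unfolding eq sum.distrib using assms by (simp add: sum.delta)
  thus "(\<Sum>v = 0..<n. (if v = a then 1 else if v = b then -1 else 0) * g v) = g a - g b"
    "(\<Sum>v = 0..<n. g v * (if v = a then 1 else if v = b then -1 else 0)) = g a - g b"
    by (auto simp: mult.commute)
qed

lemma reach_sym: "reach es u v \<Longrightarrow> reach es v u"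
  unfolding reach_def
proof (induction rule: rtranclp.induct)
  case (rtrancl_refl a) then show ?case by simp
next
  case (rtrancl_into_rtrancl a b c)
  have "adj es c b" using rtrancl_into_rtrancl(2) unfolding adj_def by auto
  then show ?case using rtrancl_into_rtrancl(3) by (rule converse_rtranclp_into_rtranclp)
qed

lemma reach_edge: "(a, b) \<in> set es \<Longrightarrow> reach es a b"
  unfolding reach_def adj_def by (rule r_into_rtranclp) auto

lemma reach_const:
  assumes "\<forall>(a,b)\<in>set fs. x a = x b" "reach fs u v"
  shows "x u = (x v :: real)"
  using assms(2) unfolding reach_def
proof (induction rule: rtranclp.induct)
  case (rtrancl_into_rtrancl a b c)
  then show ?case using assms(1) unfolding adj_def by auto
qed simp

lemma graph_part:
  fixes n :: nat and fs cs :: "(nat \<times> nat) list"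
  assumes graph: "simple_graph n (fs @ cs)"
    and forest: "spanning_forest n fs (fs @ cs)"
  defines "c \<equiv> num_components n (fs @ cs)"
  shows "\<exists>K d. K \<in> carrier_mat n c \<and> length fs + c = n
     \<and> transpose_mat (incidence n fs) * K = 0\<^sub>m (length fs) c
     \<and> transpose_mat K * incidence n cs = 0\<^sub>m c (length cs)
     \<and> transpose_mat K * K = mat_diag c d \<and> (\<forall>j<c. d j \<noteq> (0::real))
     \<and> (\<forall>x. x \<in> carrier_vec n \<longrightarrow> transpose_mat (incidence n fs) *\<^sub>v x = 0\<^sub>v (length fs)
          \<longrightarrow> transpose_mat K *\<^sub>v x = 0\<^sub>v c \<longrightarrow> x = 0\<^sub>v n)"
proof -
  define es where "es = fs @ cs"
  have edges: "\<And>a b. (a, b) \<in> set es \<Longrightarrow> a < n \<and> b < n \<and> a \<noteq> b"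
    using graph unfolding simple_graph_def es_def by auto
  define rel where "rel = {(u,v). u < n \<and> v < n \<and> reach es u v}"
  have eqv: "equiv {0..<n} rel"
    unfolding equiv_def refl_on_def sym_def trans_def rel_def
    using reach_sym[of es] by (auto simp: reach_def intro: rtranclp_trans)
  define Q where "Q = {0..<n} // rel"
  have finQ: "finite Q" unfolding Q_def by (rule finite_quotient) (auto simp: rel_def)
  have cQ: "c = card Q" unfolding c_def Q_def num_components_def rel_def es_def by simp
  have "Q = (\<lambda>v. rel``{v}) ` {0..<n}" unfolding Q_def quotient_def by auto
  hence "c \<le> n" unfolding cQ using card_image_le[of "{0..<n}" "\<lambda>v. rel``{v}"] by simp
  moreover have "length fs = n - c" using forest unfolding spanning_forest_def c_def by simp
  ultimately have fc: "length fs + c = n" by simp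
  obtain h where h: "bij_betw h {0..<c} Q" using ex_bij_betw_nat_finite[OF finQ] cQ by auto
  have hQ: "\<And>j. j < c \<Longrightarrow> \<exists>w<n. h j = rel``{w}"
  proof -
    fix j assume j: "j < c"
    have "h j \<in> {0..<n} // rel" using h j unfolding bij_betw_def Q_def by auto
    then show "\<exists>w<n. h j = rel``{w}" by (auto elim!: quotientE)
  qed
  have sub: "\<And>j v. j < c \<Longrightarrow> v \<in> h j \<Longrightarrow> v < n"
    using hQ unfolding rel_def by fastforce
  have fin: "\<And>j. j < c \<Longrightarrow> finite (h j)"
  proof -
    fix j assume "j < c"
    hence "h j \<subseteq> {0..<n}" using sub by auto
    thus "finite (h j)" using finite_subset by blast
  qed
  have ne: "\<And>j. j < c \<Longrightarrow> h j \<noteq> {}"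
    using hQ unfolding rel_def by (fastforce simp: reach_def)
  have same: "\<And>j u v. j < c \<Longrightarrow> u \<in> h j \<Longrightarrow> v \<in> h j \<Longrightarrow> reach es u v"
  proof -
    fix j u v assume a: "j < c" "u \<in> h j" "v \<in> h j"
    obtain w where w: "h j = rel``{w}" using hQ[OF a(1)] by auto
    have "reach es w u" "reach es w v" using a w unfolding rel_def by auto
    thus "reach es u v" using reach_sym[of es w u] unfolding reach_def by (meson rtranclp_trans)
  qed
  have cls: "\<And>j u v. j < c \<Longrightarrow> u \<in> h j \<Longrightarrow> v < n \<Longrightarrow> reach es u v \<Longrightarrow> v \<in> h j"
  proof -
    fix j u v assume a: "j < c" "u \<in> h j" "v < n" "reach es u v"
    obtain w where w: "h j = rel``{w}" "w < n" using hQ[OF a(1)] by auto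
    have "reach es w u" using a w unfolding rel_def by auto
    hence "reach es w v" using a(4) unfolding reach_def by (meson rtranclp_trans)
    thus "v \<in> h j" using w a(3) unfolding rel_def by auto
  qed
  have cover: "\<And>v. v < n \<Longrightarrow> \<exists>j<c. v \<in> h j"
  proof -
    fix v assume v: "v < n"
    have "rel``{v} \<in> Q" unfolding Q_def using v by (auto intro: quotientI)
    then obtain j where "j < c" "h j = rel``{v}" using h unfolding bij_betw_def by auto
    thus "\<exists>j<c. v \<in> h j" using v unfolding rel_def by (auto simp: reach_def)
  qed
  have disj: "\<And>i j v. i < c \<Longrightarrow> j < c \<Longrightarrow> i \<noteq> j \<Longrightarrow> v \<in> h i \<Longrightarrow> v \<notin> h j"
  proof -
    fix i j v assume ij: "i < c" "j < c" "i \<noteq> j" "v \<in> h i"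
    have "h i \<noteq> h j" using h ij unfolding bij_betw_def inj_on_def by auto
    moreover have "h i \<in> Q" "h j \<in> Q" using h ij unfolding bij_betw_def by auto
    ultimately have "h i \<inter> h j = {}" using quotient_disj[OF eqv] unfolding Q_def by blast
    thus "v \<notin> h j" using ij by auto
  qed
  define K where "K = mat n c (\<lambda>(v,j). if v \<in> h j then 1 else (0::real))"
  define d where "d = (\<lambda>j. real (card (h j)))"
  have Kc: "K \<in> carrier_mat n c" unfolding K_def by simp
  have EFK: "transpose_mat (incidence n fs) * K = 0\<^sub>m (length fs) c"
  proof (rule eq_matI)
    fix k j assume kj: "k < dim_row (0\<^sub>m (length fs) c)" "j < dim_col (0\<^sub>m (length fs) c)"
    obtain a b where ab: "fs ! k = (a, b)" by fastforce
    have abE: "(a, b) \<in> set es" using kj ab unfolding es_def by (metis in_set_conv_nth index_zero_mat(2) UnI1 set_append)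
    note e = edges[OF abE]
    have "(transpose_mat (incidence n fs) * K) $$ (k, j)
       = (\<Sum>v = 0..<n. (if v = a then 1 else if v = b then -1 else 0) * (if v \<in> h j then 1 else 0))"
      using kj ab unfolding K_def incidence_def by (auto simp: scalar_prod_def intro!: sum.cong)
    also have "\<dots> = 0" using sum_edge(1)[OF e[THEN conjunct1] e[THEN conjunct2, THEN conjunct1] e[THEN conjunct2, THEN conjunct2],
        of "\<lambda>v. if v \<in> h j then 1 else 0"] cls[of j a b] cls[of j b a] reach_edge[OF abE] reach_sym e kj
      by auto
    finally show "(transpose_mat (incidence n fs) * K) $$ (k, j) = 0\<^sub>m (length fs) c $$ (k, j)" using kj by simp
  qed (auto simp: K_def incidence_def)
  have KEC: "transpose_mat K * incidence n cs = 0\<^sub>m c (length cs)"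
  proof (rule eq_matI)
    fix j k assume kj: "j < dim_row (0\<^sub>m c (length cs))" "k < dim_col (0\<^sub>m c (length cs))"
    obtain a b where ab: "cs ! k = (a, b)" by fastforce
    have abE: "(a, b) \<in> set es" using kj ab unfolding es_def by (metis in_set_conv_nth index_zero_mat(3) UnI2 set_append)
    note e = edges[OF abE]
    have "(transpose_mat K * incidence n cs) $$ (j, k)
       = (\<Sum>v = 0..<n. (if v \<in> h j then 1 else 0) * (if v = a then 1 else if v = b then -1 else 0))"
      using kj ab unfolding K_def incidence_def by (auto simp: scalar_prod_def intro!: sum.cong)
    also have "\<dots> = 0" using sum_edge(2)[OF e[THEN conjunct1] e[THEN conjunct2, THEN conjunct1] e[THEN conjunct2, THEN conjunct2],
        of "\<lambda>v. if v \<in> h j then 1 else 0"] cls[of j a b] cls[of j b a] reach_edge[OF abE] reach_sym e kj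
      by auto
    finally show "(transpose_mat K * incidence n cs) $$ (j, k) = 0\<^sub>m c (length cs) $$ (j, k)" using kj by simp
  qed (auto simp: K_def incidence_def)
  have KK: "transpose_mat K * K = mat_diag c d"
  proof (rule eq_matI)
    fix i j assume ij0: "i < dim_row (mat_diag c d)" "j < dim_col (mat_diag c d)"
    hence ij: "i < c" "j < c" by (simp_all add: mat_diag_def)
    have "(transpose_mat K * K) $$ (i, j) = (\<Sum>v = 0..<n. (if v \<in> h i \<inter> h j then 1 else 0))"
      using ij unfolding K_def by (auto simp: scalar_prod_def intro!: sum.cong)
    also have "\<dots> = real (card ({0..<n} \<inter> (h i \<inter> h j)))"
      by (subst sum.inter_restrict[symmetric]) auto
    also have "\<dots> = mat_diag c d $$ (i, j)"
    proof (cases "i = j")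
      case True
      have "{0..<n} \<inter> (h i \<inter> h j) = h i" using True sub ij by auto
      thus ?thesis using True ij by (simp add: mat_diag_def d_def)
    next
      case False
      have "h i \<inter> h j = {}" using disj[of i j] False ij by auto
      thus ?thesis using False ij by (simp add: mat_diag_def)
    qed
    finally show "(transpose_mat K * K) $$ (i, j) = mat_diag c d $$ (i, j)" .
  qed (auto simp: K_def mat_diag_def)
  have dnz: "\<forall>j<c. d j \<noteq> 0" using fin ne unfolding d_def by auto
  have inj: "\<forall>x. x \<in> carrier_vec n \<longrightarrow> transpose_mat (incidence n fs) *\<^sub>v x = 0\<^sub>v (length fs)
          \<longrightarrow> transpose_mat K *\<^sub>v x = 0\<^sub>v c \<longrightarrow> x = 0\<^sub>v n"
  proof (intro allI impI)
    fix x :: "real vec" assume x: "x \<in> carrier_vec n" and ex: "transpose_mat (incidence n fs) *\<^sub>v x = 0\<^sub>v (length fs)"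
      and kx: "transpose_mat K *\<^sub>v x = 0\<^sub>v c"
    have edge_eq: "\<forall>(a,b)\<in>set fs. x $ a = x $ b"
    proof (intro ballI, clarify)
      fix a b assume abF: "(a, b) \<in> set fs"
      then obtain k where k: "k < length fs" "fs ! k = (a, b)" by (metis in_set_conv_nth)
      have abE: "(a, b) \<in> set es" using abF unfolding es_def by auto
      note e = edges[OF abE]
      have "(transpose_mat (incidence n fs) *\<^sub>v x) $ k
         = (\<Sum>v = 0..<n. (if v = a then 1 else if v = b then -1 else 0) * x $ v)"
        using k x unfolding incidence_def by (auto simp: scalar_prod_def intro!: sum.cong)
      also have "\<dots> = x $ a - x $ b"
        by (rule sum_edge(1)[OF e[THEN conjunct1] e[THEN conjunct2, THEN conjunct1] e[THEN conjunct2, THEN conjunct2]])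
      finally show "x $ a = x $ b" using ex k by simp
    qed
    show "x = 0\<^sub>v n"
    proof (rule eq_vecI)
      fix v assume "v < dim_vec (0\<^sub>v n)"
      hence v: "v < n" by simp
      obtain j where j: "j < c" "v \<in> h j" using cover[OF v] by auto
      have const: "\<And>u. u \<in> h j \<Longrightarrow> x $ u = x $ v"
      proof -
        fix u assume u: "u \<in> h j"
        have "reach es u v" by (rule same[OF j(1) u j(2)])
        hence "reach fs u v" using forest sub[OF j(1) u] v unfolding spanning_forest_def es_def by auto
        thus "x $ u = x $ v" using reach_const[of fs "\<lambda>i. x $ i"] edge_eq by blast
      qed
      have "(transpose_mat K *\<^sub>v x) $ j = (\<Sum>u = 0..<n. (if u \<in> h j then 1 else 0) * x $ u)"
        using j x unfolding K_def by (auto simp: scalar_prod_def intro!: sum.cong)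
      also have "\<dots> = (\<Sum>u = 0..<n. (if u \<in> h j then x $ v else 0))"
        by (rule sum.cong, simp, use const in auto)
      also have "\<dots> = real (card ({0..<n} \<inter> h j)) * x $ v"
        by (subst sum.inter_restrict[symmetric]) auto
      also have "{0..<n} \<inter> h j = h j" using sub j by auto
      finally have "real (card (h j)) * x $ v = 0" using kx j by simp
      moreover have "card (h j) \<noteq> 0" using fin ne j by auto
      ultimately show "x $ v = 0\<^sub>v n $ v" using v by simp
    qed (insert x, auto)
  qed
  show ?thesis using Kc fc EFK KEC KK dnz inj by blast
qed

theorem proposition1:
  fixes n :: nat and fs cs :: "(nat \<times> nat) list" and ws :: "real list"
  assumes graph: "simple_graph n (fs @ cs)"
    and wlen: "length ws = length (fs @ cs)"
    and wnz: "\<forall>x \<in> set ws. x \<noteq> 0"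
    and forest: "spanning_forest n fs (fs @ cs)"
  shows "let c = num_components n (fs @ cs);
             E = incidence n (fs @ cs);
             EF = incidence n fs;
             EC = incidence n cs;
             W = mat_diag (length (fs @ cs)) (\<lambda>k. ws ! k);
             Le = transpose_mat EF * EF;
             R = hcat (1\<^sub>m (length fs)) (the (mat_inverse Le) * transpose_mat EF * EC)
         in similar_mat (E * W * transpose_mat E)
              (four_block_mat (Le * R * W * transpose_mat R) (0\<^sub>m (length fs) c)
                              (0\<^sub>m c (length fs)) (0\<^sub>m c c))"
proof -
  obtain K d where K: "K \<in> carrier_mat n (num_components n (fs @ cs))"
    "length fs + num_components n (fs @ cs) = n"
    "transpose_mat (incidence n fs) * K = 0\<^sub>m (length fs) (num_components n (fs @ cs))"
    "transpose_mat K * incidence n cs = 0\<^sub>m (num_components n (fs @ cs)) (length cs)"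
    "transpose_mat K * K = mat_diag (num_components n (fs @ cs)) d"
    "\<forall>j<num_components n (fs @ cs). d j \<noteq> (0::real)"
    "\<forall>x. x \<in> carrier_vec n \<longrightarrow> transpose_mat (incidence n fs) *\<^sub>v x = 0\<^sub>v (length fs)
          \<longrightarrow> transpose_mat K *\<^sub>v x = 0\<^sub>v (num_components n (fs @ cs)) \<longrightarrow> x = 0\<^sub>v n"
    using graph_part[OF graph forest] by blast
  have EF: "incidence n fs \<in> carrier_mat n (length fs)" unfolding incidence_def by simp
  have EC: "incidence n cs \<in> carrier_mat n (length cs)" unfolding incidence_def by simp
  have W: "mat_diag (length (fs @ cs)) (\<lambda>k. ws ! k) \<in> carrier_mat (length fs + length cs) (length fs + length cs)"
    by simp
  note res = la_main[OF EF EC K(1) K(2) K(3) K(4) K(5) K(6) K(7)[rule_format] W]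
  show ?thesis unfolding Let_def incidence_append using res[unfolded Let_def] .
qed

end
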